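(* Suppose $c_1\ge-1$, $c_2\ge-1$ and $c_3=\bar c_3(c_1,c_2)$. Then $U^*(x):=(1+\sqrt{1+c_1})(1-x)+(-1-\sqrt{1+c_2})(1+x)$ is the unique $C^1$ solution of $(1-x^2)U'+2xU+\frac12U^2=P_c(x)$ in $(-1,1)$. In particular $U^*(-1)=\tau_2(c_1)$ and $U^*(1)=\tau_1'(c_2)$.
   Context: $P_c(x):=c_1(1-x)+c_2(1+x)+c_3(1-x^2)$ for $c=(c_1,c_2,c_3)$. $\bar c_3(c_1,c_2):=-\frac12(\sqrt{1+c_1}+\sqrt{1+c_2})(\sqrt{1+c_1}+\sqrt{1+c_2}+2)$. $\tau_2(c_1):=2+2\sqrt{1+c_1}$, $\tau_1'(c_2):=-2-2\sqrt{1+c_2}$. *)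

theory Defs
  imports Complex_Main
begin

definition P :: "real \<Rightarrow> real \<Rightarrow> real \<Rightarrow> real \<Rightarrow> real" where
  "P c1 c2 c3 x = c1 * (1 - x) + c2 * (1 + x) + c3 * (1 - x^2)"

definition c3bar :: "real \<Rightarrow> real \<Rightarrow> real" where
  "c3bar c1 c2 = - (1/2) * (sqrt (1 + c1) + sqrt (1 + c2)) * (sqrt (1 + c1) + sqrt (1 + c2) + 2)"

definition tau2 :: "real \<Rightarrow> real" where
  "tau2 c1 = 2 + 2 * sqrt (1 + c1)"

definition tau1' :: "real \<Rightarrow> real" where
  "tau1' c2 = -2 - 2 * sqrt (1 + c2)"

definition Ustar :: "real \<Rightarrow> real \<Rightarrow> real \<Rightarrow> real" where
  "Ustar c1 c2 x = (1 + sqrt (1 + c1)) * (1 - x) + (-1 - sqrt (1 + c2)) * (1 + x)"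

definition C1_solution_on :: "real \<Rightarrow> real \<Rightarrow> real \<Rightarrow> (real \<Rightarrow> real) \<Rightarrow> bool" where
  "C1_solution_on c1 c2 c3 U \<longleftrightarrow>
     (\<exists>U'. (\<forall>x\<in>{-1<..<1}. (U has_real_derivative U' x) (at x))
          \<and> continuous_on {-1<..<1} U'
          \<and> (\<forall>x\<in>{-1<..<1}. (1 - x^2) * U' x + 2 * x * U x + (1/2) * (U x)^2 = P c1 c2 c3 x))"

end

theory Submission
  imports Defs
begin

lemma mono_deriv:
  fixes g g' :: "real \<Rightarrow> real"
  assumes "a \<le> b"
    and "\<And>x. a \<le> x \<Longrightarrow> x \<le> b \<Longrightarrow> (g has_real_derivative g' x) (at x)"
    and "\<And>x. a \<le> x \<Longrightarrow> x \<le> b \<Longrightarrow> g' x \<ge> 0"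
  shows "g a \<le> g b"
proof (rule DERIV_nonneg_imp_nondecreasing[OF assms(1)])
  fix x assume x: "a \<le> x" "x \<le> b"
  show "\<exists>y. (g has_real_derivative y) (at x) \<and> y \<ge> 0"
    by (intro exI[of _ "g' x"] conjI assms(2,3) x)
qed

lemma ustar_eq:
  fixes a b x c3 :: real
  assumes "c3 = -(1/2)*(a+b)*(a+b+2)"
  shows "(1-x^2)*(-(2+a+b)) + 2*x*((1+a)*(1-x) + (-1-b)*(1+x))
     + (1/2)*((1+a)*(1-x) + (-1-b)*(1+x))^2
     = (a^2-1)*(1-x) + (b^2-1)*(1+x) + c3*(1-x^2)"
  unfolding assms power2_eq_square by (simp add: field_simps)

lemma zero_prop1:
  fixes V q :: "real \<Rightarrow> real"
  assumes "lo \<le> hi"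
    and dV: "\<And>x. lo \<le> x \<Longrightarrow> x \<le> hi \<Longrightarrow> (V has_real_derivative q x * V x) (at x)"
    and qb: "\<And>x. lo \<le> x \<Longrightarrow> x \<le> hi \<Longrightarrow> \<bar>q x\<bar> \<le> M"
    and z: "V hi = 0"
  shows "V lo = 0"
proof -
  let ?g = "\<lambda>x. (V x)^2 * exp (2*M*x)"
  have "?g lo \<le> ?g hi"
  proof (rule mono_deriv[OF assms(1)])
    fix x assume x: "lo \<le> x" "x \<le> hi"
    show "(?g has_real_derivative (2 * V x * (q x * V x)) * exp (2*M*x) + (V x)^2 * (exp (2*M*x) * (2*M))) (at x)"
      by (auto intro!: derivative_eq_intros dV[OF x] simp: power2_eq_square)
    have "q x + M \<ge> 0" using qb[OF x] by linarith
    then have "0 \<le> 2 * (V x)^2 * exp (2*M*x) * (q x + M)" by simp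
    then show "0 \<le> (2 * V x * (q x * V x)) * exp (2*M*x) + (V x)^2 * (exp (2*M*x) * (2*M))"
      by (simp add: algebra_simps power2_eq_square)
  qed
  with z have "(V lo)^2 * exp (2*M*lo) \<le> 0" by simp
  then have "(V lo)^2 \<le> 0" by (simp add: mult_le_0_iff)
  then show ?thesis by simp
qed

lemma zero_prop2:
  fixes V q :: "real \<Rightarrow> real"
  assumes "lo \<le> hi"
    and dV: "\<And>x. lo \<le> x \<Longrightarrow> x \<le> hi \<Longrightarrow> (V has_real_derivative q x * V x) (at x)"
    and qb: "\<And>x. lo \<le> x \<Longrightarrow> x \<le> hi \<Longrightarrow> \<bar>q x\<bar> \<le> M"
    and z: "V lo = 0"
  shows "V hi = 0"
proof -
  let ?g = "\<lambda>x. - ((V x)^2 * exp (-(2*M*x)))"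
  have "?g lo \<le> ?g hi"
  proof (rule mono_deriv[OF assms(1)])
    fix x assume x: "lo \<le> x" "x \<le> hi"
    show "(?g has_real_derivative - ((2 * V x * (q x * V x)) * exp (-(2*M*x)) + (V x)^2 * (exp (-(2*M*x)) * (-(2*M))))) (at x)"
      by (auto intro!: derivative_eq_intros dV[OF x] simp: power2_eq_square)
    have "M - q x \<ge> 0" using qb[OF x] by linarith
    then have "0 \<le> 2 * (V x)^2 * exp (-(2*M*x)) * (M - q x)" by simp
    then show "0 \<le> - ((2 * V x * (q x * V x)) * exp (-(2*M*x)) + (V x)^2 * (exp (-(2*M*x)) * (-(2*M))))"
      by (simp add: algebra_simps power2_eq_square)
  qed
  with z have "(V hi)^2 * exp (-(2*M*hi)) \<le> 0" by simp
  then have "(V hi)^2 \<le> 0" by (simp add: mult_le_0_iff)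
  then show ?thesis by simp
qed

lemma alg1:
  fixes d W s pp t :: real
  assumes "d \<noteq> 0" "d * t = -W*(W/2 + s)" "s = pp*d"
  shows "t = (-(W/2)/d - pp)*W"
proof -
  have "t = -W*(W/2 + s)/d" using assms(1,2) by (simp add: field_simps)
  also have "\<dots> = (-(W/2)/d - pp)*W" using assms(1,3) by (simp add: field_simps)
  finally show ?thesis .
qed

lemma inv_alg:
  fixes V h x :: real
  assumes "V * h \<noteq> 0" "1-x^2 \<noteq> 0"
  shows "- ((- (V/2)/(1-x^2)) * V * h * inverse ((V * h) ^ Suc (Suc 0))) = 1/(2*(1-x^2)*h)"
  using assms by (simp add: field_simps)

lemma id_gen:
  fixes d P U u k x :: real
  shows "d*(P + k) - (-(U - u)*(2*x+(U + u)/2))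
     = (d*P + 2*x*U + (1/2)*U^2) - (d*(-k) + 2*x*u + (1/2)*u^2)"
  by (simp add: field_simps power2_eq_square)

lemma V_deriv:
  fixes U U' :: "real \<Rightarrow> real" and a b c3 x :: real
  assumes c3: "c3 = -(1/2)*(a+b)*(a+b+2)" and x: "-1 < x" "x < 1"
    and d: "(U has_real_derivative U' x) (at x)"
    and e: "(1-x^2)*U' x + 2*x*U x + (1/2)*(U x)^2 = (a^2-1)*(1-x) + (b^2-1)*(1+x) + c3*(1-x^2)"
  shows "((\<lambda>x. U x - ((1+a)*(1-x) + (-1-b)*(1+x))) has_real_derivative
           (- ((U x - ((1+a)*(1-x) + (-1-b)*(1+x)))/2)/(1-x^2) - (a/(1+x) - b/(1-x)))
           * (U x - ((1+a)*(1-x) + (-1-b)*(1+x)))) (at x)"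
proof -
  let ?u = "(1+a)*(1-x) + (-1-b)*(1+x)"
  have du: "((\<lambda>x. (1+a)*(1-x) + (-1-b)*(1+x)) has_real_derivative -(2+a+b)) (at x)"
    by (auto intro!: derivative_eq_intros)
  have ue: "(1-x^2)*(-(2+a+b)) + 2*x*?u + (1/2)*?u^2 = (a^2-1)*(1-x) + (b^2-1)*(1+x) + c3*(1-x^2)"
    by (rule ustar_eq[OF c3])
  have id: "(1-x^2)*(U' x + (2+a+b)) - (-(U x - ?u)*(2*x+(U x + ?u)/2))
     = ((1-x^2)*U' x + 2*x*U x + (1/2)*(U x)^2) - ((1-x^2)*(-(2+a+b)) + 2*x*?u + (1/2)*?u^2)"
    by (rule id_gen)
  have 1: "(1-x^2)*(U' x + (2+a+b)) = -(U x - ?u)*(2*x+(U x + ?u)/2)"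
    using id e ue by linarith
  have p1: "1 + x > 0" "1 - x > 0" using x by auto
  have pos: "1 - x^2 > 0" using x abs_square_less_1[of x] by auto
  have 2: "2*x + ?u = (a/(1+x) - b/(1-x))*(1-x^2)"
  proof -
    have q1: "a/(1+x)*((1+x)*(1-x)) = a*(1-x)" using p1 by simp
    have q2: "b/(1-x)*((1+x)*(1-x)) = b*(1+x)" using p1 by simp
    have sq: "1-x^2 = (1+x)*(1-x)" by (simp add: algebra_simps power2_eq_square)
    have "(a/(1+x) - b/(1-x))*(1-x^2) = a/(1+x)*((1+x)*(1-x)) - b/(1-x)*((1+x)*(1-x))"
      unfolding sq by (rule left_diff_distrib)
    also have "\<dots> = a*(1-x) - b*(1+x)" using q1 q2 by simp
    also have "\<dots> = 2*x + ?u" by (simp add: algebra_simps)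
    finally show ?thesis by simp
  qed
  have key: "U' x - (-(2+a+b)) = (- ((U x - ?u)/2)/(1-x^2) - (a/(1+x) - b/(1-x))) * (U x - ?u)"
  proof -
    have eqa: "(U x - ?u)/2 + (2*x+?u) = 2*x+(U x + ?u)/2" by (simp add: field_simps)
    have h1: "(1-x^2)*(U' x + (2+a+b)) = -(U x - ?u)*((U x - ?u)/2 + (2*x+?u))"
      unfolding eqa by (rule 1)
    have "U' x + (2+a+b) = (- ((U x - ?u)/2)/(1-x^2) - (a/(1+x) - b/(1-x))) * (U x - ?u)"
      by (rule alg1[OF _ h1 2]) (use pos in simp)
    then show ?thesis by (simp only: diff_minus_eq_add)
  qed
  have D: "((\<lambda>x. U x - ((1+a)*(1-x) + (-1-b)*(1+x))) has_real_derivative U' x - (-(2+a+b))) (at x)"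
    by (rule DERIV_diff[OF d du])
  show ?thesis by (rule DERIV_cong[OF D key])
qed

lemma no_nonvanishing:
  fixes V :: "real \<Rightarrow> real" and a b :: real
  assumes a: "a \<ge> 0" and b: "b \<ge> 0"
  and dV: "\<And>x. -1 < x \<Longrightarrow> x < 1 \<Longrightarrow>
     (V has_real_derivative (- (V x/2)/(1-x^2) - (a/(1+x) - b/(1-x))) * V x) (at x)"
  and nz: "\<And>x. -1 < x \<Longrightarrow> x < 1 \<Longrightarrow> V x \<noteq> 0"
  shows False
proof -
  define h where "h = (\<lambda>x. exp (a*ln(1+x) + b*ln(1-x)))"
  define H where "H = exp ((a+b)*ln 2)"
  define K where "K = 1/(4*H)"
  define F where "F = (\<lambda>x. inverse (V x * h x))"
  have Hpos: "H > 0" "K > 0" unfolding H_def K_def by auto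
  have hpos: "h x > 0" for x unfolding h_def by simp
  have hH: "h x \<le> H" if "-1 < x" "x < 1" for x
  proof -
    have "ln (1+x) \<le> ln 2" "ln (1-x) \<le> ln 2" using that by auto
    then have "a*ln(1+x) + b*ln(1-x) \<le> a*ln 2 + b * ln 2"
      using a b by (intro add_mono mult_left_mono) auto
    then show ?thesis unfolding h_def H_def by (simp add: distrib_right)
  qed
  have hd: "(h has_real_derivative h x * (a/(1+x) - b/(1-x))) (at x)" if "-1 < x" "x < 1" for x
  proof -
    have p: "1+x \<noteq> 0" "1-x \<noteq> 0" "1+x > 0" "1-x > 0" using that by auto
    show ?thesis unfolding h_def using p
      by (auto intro!: derivative_eq_intros simp: field_simps)
  qed
  have Fd: "(F has_real_derivative 1/(2*(1-x^2)*h x)) (at x)" if x: "-1<x" "x<1" for x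
  proof -
    have vh: "V x * h x \<noteq> 0" using nz[OF x] hpos[of x] by simp
    have p: "1+x \<noteq> 0" "1-x \<noteq> 0" "1-x^2 \<noteq> 0" using x abs_square_less_1[of x] by auto
    have d1: "((\<lambda>x. V x * h x) has_real_derivative
       V x * (h x * (a/(1+x) - b/(1-x))) + ((- (V x/2)/(1-x^2) - (a/(1+x) - b/(1-x))) * V x) * h x) (at x)"
      by (rule DERIV_mult'[OF dV[OF x] hd[OF x]])
    note d2 = DERIV_inverse_fun[OF d1 vh]
    have gen: "\<And>A p::real. V x * (h x * p) + ((A - p) * V x) * h x = A * V x * h x"
      by (simp add: algebra_simps)
    have e1: "V x * (h x * (a/(1+x) - b/(1-x))) + ((- (V x/2)/(1-x^2) - (a/(1+x) - b/(1-x))) * V x) * h x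
       = (- (V x/2)/(1-x^2)) * V x * h x"
      by (rule gen)
    have e2: "- ((- (V x/2)/(1-x^2)) * V x * h x * inverse ((V x * h x) ^ Suc (Suc 0))) = 1/(2*(1-x^2)*h x)"
      by (rule inv_alg[OF vh p(3)])
    show ?thesis using d2 unfolding F_def e1 e2 by simp
  qed
  have lb: "K/(1+x) \<le> 1/(2*(1-x^2)*h x) \<and> K/(1-x) \<le> 1/(2*(1-x^2)*h x)" if x: "-1<x" "x<1" for x
  proof -
    have "(1-x)*h x \<le> 2*H" by (rule mult_mono) (use hH[OF x] hpos[of x] x in auto)
    then have "2*(1+x)*((1-x)*h x) \<le> 2*(1+x)*(2*H)" using x by (intro mult_left_mono) auto
    moreover have "2*(1-x^2)*h x = 2*(1+x)*((1-x)*h x)" by (simp add: algebra_simps power2_eq_square)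
    moreover have "2*(1+x)*(2*H) = 4*H*(1+x)" by simp
    ultimately have l1: "2*(1-x^2)*h x \<le> 4*H*(1+x)" by linarith
    have "(1+x)*h x \<le> 2*H" by (rule mult_mono) (use hH[OF x] hpos[of x] x in auto)
    then have "2*(1-x)*((1+x)*h x) \<le> 2*(1-x)*(2*H)" using x by (intro mult_left_mono) auto
    moreover have "2*(1-x^2)*h x = 2*(1-x)*((1+x)*h x)" by (simp add: algebra_simps power2_eq_square)
    moreover have "2*(1-x)*(2*H) = 4*H*(1-x)" by simp
    ultimately have l2: "2*(1-x^2)*h x \<le> 4*H*(1-x)" by linarith
    have pp: "0 < 2*(1-x^2)*h x" using x hpos[of x] abs_square_less_1[of x]
      by (intro mult_pos_pos) auto
    have "1/(4*H*(1+x)) \<le> 1/(2*(1-x^2)*h x)" by (rule frac_le) (use pp l1 in auto)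
    moreover have "1/(4*H*(1-x)) \<le> 1/(2*(1-x^2)*h x)" by (rule frac_le) (use pp l2 in auto)
    ultimately show ?thesis unfolding K_def by simp
  qed
  define T where "T = (\<bar>F 0\<bar> + 1)/K"
  have Tpos: "T > 0" and KT: "K * T = \<bar>F 0\<bar> + 1" using Hpos unfolding T_def by auto
  define xm where "xm = exp (-T) - 1"
  define xp where "xp = 1 - exp (-T)"
  have e1: "exp (-T) < 1" "exp (-T) > 0" using Tpos by auto
  have xm: "-1 < xm" "xm < 0" and xp: "0 < xp" "xp < 1" using e1 unfolding xm_def xp_def by auto
  have "(\<lambda>x. F x - K*ln(1+x)) xm \<le> (\<lambda>x. F x - K*ln(1+x)) 0"
  proof (rule mono_deriv[where g="\<lambda>x. F x - K*ln(1+x)" and g'="\<lambda>x. 1/(2*(1-x^2)*h x) - K*(1/(1+x))" and a=xm and b=0])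
    show "xm \<le> 0" using xm by simp
    fix x assume x: "xm \<le> x" "x \<le> 0"
    then have x': "-1 < x" "x < 1" using xm by auto
    have l: "((\<lambda>x. ln (1+x)) has_real_derivative 1/(1+x)) (at x)"
      using x' by (auto intro!: derivative_eq_intros)
    show "((\<lambda>x. F x - K*ln(1+x)) has_real_derivative 1/(2*(1-x^2)*h x) - K*(1/(1+x))) (at x)"
      by (rule DERIV_diff[OF Fd[OF x'] DERIV_cmult[OF l]])
    show "0 \<le> 1/(2*(1-x^2)*h x) - K*(1/(1+x))" using lb[OF x'] by simp
  qed
  moreover have "ln (1+xm) = -T" unfolding xm_def by simp
  ultimately have "F xm \<le> F 0 - K*T" by (simp add: algebra_simps)
  then have "F xm < 0" using KT by simp
  then have Vm: "V xm < 0" unfolding F_def using hpos[of xm]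
    by (simp add: mult_less_0_iff)
  have "(\<lambda>x. F x + K*ln(1-x)) 0 \<le> (\<lambda>x. F x + K*ln(1-x)) xp"
  proof (rule mono_deriv[where g="\<lambda>x. F x + K*ln(1-x)" and g'="\<lambda>x. 1/(2*(1-x^2)*h x) + K*(-1/(1-x))" and a=0 and b=xp])
    show "0 \<le> xp" using xp by simp
    fix x assume x: "0 \<le> x" "x \<le> xp"
    then have x': "-1 < x" "x < 1" using xp by auto
    have l: "((\<lambda>x. ln (1-x)) has_real_derivative -1/(1-x)) (at x)"
      using x' by (auto intro!: derivative_eq_intros)
    show "((\<lambda>x. F x + K*ln(1-x)) has_real_derivative 1/(2*(1-x^2)*h x) + K*(-1/(1-x))) (at x)"
      by (rule DERIV_add[OF Fd[OF x'] DERIV_cmult[OF l]])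
    show "0 \<le> 1/(2*(1-x^2)*h x) + K*(-1/(1-x))" using lb[OF x'] by simp
  qed
  moreover have "ln (1-xp) = -T" unfolding xp_def by simp
  ultimately have "F 0 + K*T \<le> F xp" by (simp add: algebra_simps)
  then have "F xp > 0" using KT by simp
  then have Vp: "V xp > 0" unfolding F_def using hpos[of xp]
    by (simp add: zero_less_mult_iff)
  have "\<exists>z. xm \<le> z \<and> z \<le> xp \<and> V z = 0"
    using xm xp Vm Vp by (intro IVT) (auto intro!: DERIV_isCont[OF dV])
  then show False using xm xp nz by force
qed

theorem lemma2p5:
  fixes c1 c2 c3 :: real
  assumes "c1 \<ge> -1" and "c2 \<ge> -1" and "c3 = c3bar c1 c2"
  shows "C1_solution_on c1 c2 c3 (Ustar c1 c2)
         \<and> (\<forall>U. C1_solution_on c1 c2 c3 U \<longrightarrow> (\<forall>x\<in>{-1<..<1}. U x = Ustar c1 c2 x))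
         \<and> Ustar c1 c2 (-1) = tau2 c1
         \<and> Ustar c1 c2 1 = tau1' c2"
proof -
  define a where "a = sqrt (1+c1)"
  define b where "b = sqrt (1+c2)"
  have h1: "0 \<le> 1 + c1" and h2: "0 \<le> 1 + c2" using assms(1,2) by auto
  have a: "a \<ge> 0" and b: "b \<ge> 0" unfolding a_def b_def using h1 h2 by auto
  have a2: "c1 = a^2 - 1" unfolding a_def using real_sqrt_pow2[OF h1] by simp
  have b2: "c2 = b^2 - 1" unfolding b_def using real_sqrt_pow2[OF h2] by simp
  have c3e: "c3 = -(1/2)*(a+b)*(a+b+2)" using assms(3) unfolding c3bar_def a_def b_def by simp
  have Peq: "P c1 c2 c3 x = (a^2-1)*(1-x) + (b^2-1)*(1+x) + c3*(1-x^2)" for x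
    unfolding P_def using a2 b2 by simp
  have Us: "Ustar c1 c2 = (\<lambda>x. (1+a)*(1-x) + (-1-b)*(1+x))"
    unfolding Ustar_def a_def b_def by (simp add: fun_eq_iff)
  have ex: "C1_solution_on c1 c2 c3 (Ustar c1 c2)"
    unfolding C1_solution_on_def Us
  proof (intro exI[where x="\<lambda>_. -(2+a+b)"] conjI ballI)
    fix x :: real
    show "((\<lambda>x. (1+a)*(1-x) + (-1-b)*(1+x)) has_real_derivative -(2+a+b)) (at x)"
      by (auto intro!: derivative_eq_intros)
    show "(1 - x^2) * -(2+a+b) + 2*x*((1+a)*(1-x) + (-1-b)*(1+x))
          + (1/2)*((1+a)*(1-x) + (-1-b)*(1+x))^2 = P c1 c2 c3 x"
      unfolding Peq by (rule ustar_eq[OF c3e])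
  qed (rule continuous_on_const)
  have uniq: "\<forall>U. C1_solution_on c1 c2 c3 U \<longrightarrow> (\<forall>x\<in>{-1<..<1}. U x = Ustar c1 c2 x)"
  proof (intro allI impI ballI)
    fix U x0 assume sol: "C1_solution_on c1 c2 c3 U" and x0: "x0 \<in> {-1<..<1::real}"
    then obtain U' where d: "\<forall>x\<in>{-1<..<1}. (U has_real_derivative U' x) (at x)"
      and e: "\<forall>x\<in>{-1<..<1}. (1 - x^2) * U' x + 2 * x * U x + (1/2) * (U x)^2 = P c1 c2 c3 x"
      unfolding C1_solution_on_def by blast
    define V where "V = (\<lambda>x. U x - ((1+a)*(1-x) + (-1-b)*(1+x)))"
    define q where "q = (\<lambda>x. - (V x/2)/(1-x^2) - (a/(1+x) - b/(1-x)))"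
    have dV: "(V has_real_derivative q x * V x) (at x)" if x: "-1<x" "x<1" for x
    proof -
      have dx: "(U has_real_derivative U' x) (at x)" using d x by auto
      have ex: "(1 - x^2) * U' x + 2 * x * U x + (1/2) * (U x)^2
          = (a^2-1)*(1-x) + (b^2-1)*(1+x) + c3*(1-x^2)" using e x Peq by auto
      show ?thesis using V_deriv[of c3 a b x U U', OF c3e x dx ex] unfolding V_def q_def by simp
    qed
    show "U x0 = Ustar c1 c2 x0"
    proof (rule ccontr)
      assume ne: "U x0 \<noteq> Ustar c1 c2 x0"
      then have V0: "V x0 \<noteq> 0" unfolding V_def Us by simp
      have nz: "V x \<noteq> 0" if x: "-1<x" "x<1" for x
      proof
        assume Vx: "V x = 0"
        define lo where "lo = min x x0"
        define hi where "hi = max x x0"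
        have lohi: "-1 < lo" "hi < 1" "lo \<le> hi" using x x0 by (auto simp: lo_def hi_def)
        have cont: "isCont (\<lambda>y. \<bar>q y\<bar>) y" if y: "lo \<le> y" "y \<le> hi" for y
        proof -
          have y': "-1 < y" "y < 1" using y lohi by auto
          have p: "1+y \<noteq> 0" "1-y \<noteq> 0" "1-y^2 \<noteq> 0" using y' abs_square_less_1[of y] by auto
          have "isCont V y" by (rule DERIV_isCont[OF dV[OF y']])
          then show ?thesis unfolding q_def using p by (auto intro!: continuous_intros)
        qed
        obtain M where M: "\<And>y. lo \<le> y \<Longrightarrow> y \<le> hi \<Longrightarrow> \<bar>q y\<bar> \<le> M"
          using isCont_bounded[of lo hi "\<lambda>y. \<bar>q y\<bar>"] lohi cont by blast
        have dV': "\<And>y. lo \<le> y \<Longrightarrow> y \<le> hi \<Longrightarrow> (V has_real_derivative q y * V y) (at y)"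
          using dV lohi by force
        show False
        proof (cases "x \<le> x0")
          case True
          then have "lo = x" "hi = x0" unfolding lo_def hi_def by auto
          then show False using zero_prop2[OF lohi(3) dV' M] Vx V0 by simp
        next
          case False
          then have "lo = x0" "hi = x" unfolding lo_def hi_def by auto
          then show False using zero_prop1[OF lohi(3) dV' M] Vx V0 by simp
        qed
      qed
      show False using no_nonvanishing[OF a b, of V] dV nz unfolding q_def by blast
    qed
  qed
  have "Ustar c1 c2 (-1) = tau2 c1" unfolding Ustar_def tau2_def by simp
  moreover have "Ustar c1 c2 1 = tau1' c2" unfolding Ustar_def tau1'_def by simp
  ultimately show ?thesis using ex uniq by blast
qed

end
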